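(* (1) For $s\in\{0,1,\dots,\lfloor\frac{k_0-2}{2}\rfloor\}$ with $s':=k_0-1-s\le p-2$, we have $G^{(s),\dagger}(w,t)=G^{(s'),\dagger}(w,t)$ in $\mathbb Z_p[w][[t]]$. (2) For $s\in\{k_0,\dots,\lfloor\frac{k_0-2+p-1}{2}\rfloor\}$ and $s'':=k_0-1-s+p-1$, we have $G^{(s),\dagger}(w,t)=G^{(s''),\dagger}(w,t)$ in $\mathbb Z_p[w][[t]]$.
   Context: Fix a prime $p\ge7$ and $k_0\in\{2,\dots,p\}$. $\{n\}$ is the residue of $n$ mod $p-1$ in $\{0,\dots,p-2\}$. $\mathcal K=\{k\ge2:k\equiv k_0\pmod{p-1}\}$, $k_\bullet=(k-k_0)/(p-1)$. For $s\in\{0,\dots,p-2\}$: $a_s=\{k_0-2-2s\}$, $\delta_s=\lfloor\frac{s+\{a_s+s\}}{p-1}\rfloor$; if $a_s+s<p-1$, $t_1^{(s)}=s+\delta_s$, $t_2^{(s)}=a_s+s+\delta_s+2$; otherwise $t_1^{(s)}=\{a_s+s\}+\delta_s+1$, $t_2^{(s)}=s+\delta_s+1$. For $k\in\mathcal K$: $d_k^{ur}(s)=\lfloor\frac{k_\bullet-t_1^{(s)}}{p+1}\rfloor+\lfloor\frac{k_\bullet-t_2^{(s)}}{p+1}\rfloor+2$, $d_k^{ur,\dagger}(s)=d_k^{ur}(s)+\delta_s$, $d_k^{Iw,\dagger}=2k_\bullet+2$. Set $m_n^{(s),\dagger}(k)=\min\{n-d_k^{ur,\dagger}(s),\,d_k^{Iw,\dagger}-d_k^{ur,\dagger}(s)-n\}$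 if $d_k^{ur,\dagger}(s)<n<d_k^{Iw,\dagger}-d_k^{ur,\dagger}(s)$, else $0$; $w_k=\exp((k-2)p)-1$; $g_n^{(s),\dagger}(w)=\prod_{k\in\mathcal K}(w-w_k)^{m_n^{(s),\dagger}(k)}$; $G^{(s),\dagger}(w,t)=\sum_{n\ge0}g_n^{(s),\dagger}(w)t^n$. *)

theory Defs
  imports "HOL-Computational_Algebra.Polynomial" "HOL-Computational_Algebra.Formal_Power_Series"
begin

definition res :: "int \<Rightarrow> int \<Rightarrow> int" where
  "res p n = n mod (p - 1)"

definition a_s :: "int \<Rightarrow> int \<Rightarrow> int \<Rightarrow> int" where
  "a_s p k0 s = res p (k0 - 2 - 2 * s)"

definition delta_s :: "int \<Rightarrow> int \<Rightarrow> int \<Rightarrow> int" where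
  "delta_s p k0 s = \<lfloor>real_of_int (s + res p (a_s p k0 s + s)) / real_of_int (p - 1)\<rfloor>"

definition t1 :: "int \<Rightarrow> int \<Rightarrow> int \<Rightarrow> int" where
  "t1 p k0 s = (if a_s p k0 s + s < p - 1 then s + delta_s p k0 s
                else res p (a_s p k0 s + s) + delta_s p k0 s + 1)"

definition t2 :: "int \<Rightarrow> int \<Rightarrow> int \<Rightarrow> int" where
  "t2 p k0 s = (if a_s p k0 s + s < p - 1 then a_s p k0 s + s + delta_s p k0 s + 2
                else s + delta_s p k0 s + 1)"

definition wtK :: "int \<Rightarrow> int \<Rightarrow> int set" where
  "wtK p k0 = {k. k \<ge> 2 \<and> k mod (p - 1) = k0 mod (p - 1)}"

definition kbul :: "int \<Rightarrow> int \<Rightarrow> int \<Rightarrow> int" where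
  "kbul p k0 k = (k - k0) div (p - 1)"

definition d_ur :: "int \<Rightarrow> int \<Rightarrow> int \<Rightarrow> int \<Rightarrow> int" where
  "d_ur p k0 s k =
     \<lfloor>real_of_int (kbul p k0 k - t1 p k0 s) / real_of_int (p + 1)\<rfloor>
   + \<lfloor>real_of_int (kbul p k0 k - t2 p k0 s) / real_of_int (p + 1)\<rfloor> + 2"

definition d_ur_dag :: "int \<Rightarrow> int \<Rightarrow> int \<Rightarrow> int \<Rightarrow> int" where
  "d_ur_dag p k0 s k = d_ur p k0 s k + delta_s p k0 s"

definition d_Iw_dag :: "int \<Rightarrow> int \<Rightarrow> int \<Rightarrow> int" where
  "d_Iw_dag p k0 k = 2 * kbul p k0 k + 2"

definition mult_dag :: "int \<Rightarrow> int \<Rightarrow> int \<Rightarrow> nat \<Rightarrow> int \<Rightarrow> nat" where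
  "mult_dag p k0 s n k =
     (if d_ur_dag p k0 s k < int n \<and> int n < d_Iw_dag p k0 k - d_ur_dag p k0 s k
      then nat (min (int n - d_ur_dag p k0 s k) (d_Iw_dag p k0 k - d_ur_dag p k0 s k - int n))
      else 0)"

text \<open>g_n: product over k in K of (w - w_k)^m; only finitely many factors are nontrivial,
  so the product is taken over those k with nonzero exponent.  The values w_k are
  a parameter wk (in the paper w_k = exp((k-2)p) - 1 in Z_p).\<close>
definition g_dag :: "int \<Rightarrow> int \<Rightarrow> (int \<Rightarrow> 'a::comm_ring_1) \<Rightarrow> int \<Rightarrow> nat \<Rightarrow> 'a poly" where
  "g_dag p k0 wk s n =
     (\<Prod>k\<in>{k \<in> wtK p k0. mult_dag p k0 s n k \<noteq> 0}. [:- wk k, 1:] ^ mult_dag p k0 s n k)"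

definition G_dag :: "int \<Rightarrow> int \<Rightarrow> (int \<Rightarrow> 'a::comm_ring_1) \<Rightarrow> int \<Rightarrow> 'a poly fps" where
  "G_dag p k0 wk s = Abs_fps (\<lambda>n. g_dag p k0 wk s n)"

end

theory Submission
  imports Defs
begin

lemma fdiv: "\<lfloor>real_of_int a / real_of_int b\<rfloor> = a div b"
  by (rule floor_divide_of_int_eq)

lemma mod_sh: "(m::int) > 0 \<Longrightarrow> -m \<le> x \<Longrightarrow> x < 0 \<Longrightarrow> x mod m = x + m"
proof -
  assume h: "m > 0" "-m \<le> x" "x < 0"
  have "(x + m) mod m = x + m" using h by (subst mod_pos_pos_trivial) auto
  thus ?thesis by simp
qed

lemma mod_sh2: "(m::int) > 0 \<Longrightarrow> -2*m \<le> x \<Longrightarrow> x < -m \<Longrightarrow> x mod m = x + 2*m"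
proof -
  assume h: "m > 0" "-2*m \<le> x" "x < -m"
  have "(x + 2*m) mod m = x + 2*m" using h by (subst mod_pos_pos_trivial) auto
  moreover have "(x + 2*m) mod m = x mod m" by (metis mod_mult_self1 mult.commute)
  ultimately show ?thesis by simp
qed

lemma mod_up: "(m::int) > 0 \<Longrightarrow> m \<le> x \<Longrightarrow> x < 2*m \<Longrightarrow> x mod m = x - m"
proof -
  assume h: "m > 0" "m \<le> x" "x < 2*m"
  have "(x - m) mod m = x - m" using h by (subst mod_pos_pos_trivial) auto
  thus ?thesis by simp
qed

lemma div_one: "(m::int) > 0 \<Longrightarrow> m \<le> x \<Longrightarrow> x < 2*m \<Longrightarrow> x div m = 1"
proof -
  assume h: "m > 0" "m \<le> x" "x < 2*m"
  have "(x - m) div m = 0" using h by (intro div_pos_pos_trivial) auto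
  moreover have "x div m = ((x-m) + m) div m" by simp
  moreover have "((x-m) + m) div m = (x-m) div m + 1" using h by (simp only: div_add_self2)
  ultimately show ?thesis by simp
qed

lemma div_zero: "(m::int) > 0 \<Longrightarrow> 0 \<le> x \<Longrightarrow> x < m \<Longrightarrow> x div m = 0"
  by (rule div_pos_pos_trivial)

lemma fdiv2: "\<lfloor>real_of_int a / 2\<rfloor> = a div 2"
  using fdiv[of a 2] by simp

lemma c1s:
  assumes "0 \<le> s" "2*s \<le> k0-2" "k0 \<le> p" "p \<ge> 7"
  shows "delta_s p k0 s = 0 \<and> t1 p k0 s = s \<and> t2 p k0 s = k0 - s"
proof -
  have a: "a_s p k0 s = k0-2-2*s" unfolding a_s_def res_def using assms by (subst mod_pos_pos_trivial) auto
  have r: "res p (a_s p k0 s + s) = k0-2-s" unfolding a res_def using assms by (subst mod_pos_pos_trivial) auto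
  have d: "delta_s p k0 s = 0" unfolding delta_s_def fdiv r using assms by (intro div_pos_pos_trivial) auto
  show ?thesis using d a assms unfolding t1_def t2_def by auto
qed

lemma c1s':
  assumes "1 \<le> s" "2*s \<le> k0-2" "k0-1-s \<le> p-2" "k0 \<le> p" "p \<ge> 7"
  shows "delta_s p k0 (k0-1-s) = 0 \<and> t1 p k0 (k0-1-s) = s \<and> t2 p k0 (k0-1-s) = k0 - s"
proof -
  have a: "a_s p k0 (k0-1-s) = 2*s-k0+p-1" unfolding a_s_def res_def using assms
    by (subst mod_sh) auto
  have r: "res p (a_s p k0 (k0-1-s) + (k0-1-s)) = s-1" unfolding a res_def using assms
    by (subst mod_up) auto
  have d: "delta_s p k0 (k0-1-s) = 0" unfolding delta_s_def fdiv r using assms by (intro div_pos_pos_trivial) auto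
  show ?thesis using d a r assms unfolding t1_def t2_def by auto
qed

lemma c1z:
  assumes "k0-1 \<le> p-2" "2 \<le> k0" "k0 \<le> p" "p \<ge> 7"
  shows "delta_s p k0 (k0-1) = 1 \<and> t1 p k0 (k0-1) = k0 \<and> t2 p k0 (k0-1) = p+1"
proof -
  have a: "a_s p k0 (k0-1) = p-1-k0" unfolding a_s_def res_def using assms
    by (subst mod_sh) auto
  have r: "res p (a_s p k0 (k0-1) + (k0-1)) = p-2" unfolding a res_def using assms
    by (subst mod_pos_pos_trivial) auto
  have d: "delta_s p k0 (k0-1) = 1" unfolding delta_s_def fdiv r using assms by (intro div_one) auto
  show ?thesis using d a r assms unfolding t1_def t2_def by auto
qed

lemma c2s:
  assumes "k0 \<le> s" "2*s \<le> k0+p-3" "2 \<le> k0" "k0 \<le> p" "p \<ge> 7"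
  shows "delta_s p k0 s = 1 \<and> t1 p k0 s = s+1 \<and> t2 p k0 s = k0 + p - s"
proof -
  have a: "a_s p k0 s = k0+p-3-2*s" unfolding a_s_def res_def using assms
    by (subst mod_sh) auto
  have r: "res p (a_s p k0 s + s) = k0+p-3-s" unfolding a res_def using assms
    by (subst mod_pos_pos_trivial) auto
  have d: "delta_s p k0 s = 1" unfolding delta_s_def fdiv r using assms by (intro div_one) auto
  show ?thesis using d a r assms unfolding t1_def t2_def by auto
qed

lemma c2s':
  assumes "k0 \<le> s" "2*s \<le> k0+p-3" "2 \<le> k0" "k0 \<le> p" "p \<ge> 7"
  shows "delta_s p k0 (k0-1-s+p-1) = 1 \<and> t1 p k0 (k0-1-s+p-1) = s+1 \<and> t2 p k0 (k0-1-s+p-1) = k0 + p - s"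
proof -
  have a: "a_s p k0 (k0-1-s+p-1) = 2*s-k0" unfolding a_s_def res_def using assms
    by (subst mod_sh2) auto
  have r: "res p (a_s p k0 (k0-1-s+p-1) + (k0-1-s+p-1)) = s-1" unfolding a res_def using assms
    by (subst mod_up) auto
  have d: "delta_s p k0 (k0-1-s+p-1) = 1" unfolding delta_s_def fdiv r using assms by (intro div_one) auto
  show ?thesis using d a r assms unfolding t1_def t2_def by auto
qed


lemma G_eq:
  assumes "\<And>k. d_ur_dag p k0 s k = d_ur_dag p k0 s' k"
  shows "G_dag p k0 wk s = G_dag p k0 wk s'"
proof -
  have m: "mult_dag p k0 s n k = mult_dag p k0 s' n k" for n k
    unfolding mult_dag_def using assms by simp
  have "g_dag p k0 wk s n = g_dag p k0 wk s' n" for n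
    unfolding g_dag_def m ..
  hence "g_dag p k0 wk s = g_dag p k0 wk s'" by (rule ext)
  thus ?thesis unfolding G_dag_def by simp
qed

lemma dur_same:
  "delta_s p k0 s = delta_s p k0 s' \<Longrightarrow> t1 p k0 s = t1 p k0 s' \<Longrightarrow> t2 p k0 s = t2 p k0 s'
   \<Longrightarrow> d_ur_dag p k0 s k = d_ur_dag p k0 s' k"
  unfolding d_ur_dag_def d_ur_def by simp

lemma div_m1: "(m::int) \<noteq> 0 \<Longrightarrow> (x - m) div m = x div m - 1"
proof -
  assume "m \<noteq> 0"
  have "(x + c * m) div m = x div m + c" for c using \<open>m \<noteq> 0\<close> by simp
  from this[of "-1"] have "(x + (-1) * m) div m = x div m + (-1)" .
  thus ?thesis by simp
qed

lemma dur_shift: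
  assumes "p \<ge> 7" "t1 p k0 s' = t2 p k0 s" "t2 p k0 s' = t1 p k0 s + (p+1)"
    "delta_s p k0 s' = delta_s p k0 s + 1"
  shows "d_ur_dag p k0 s k = d_ur_dag p k0 s' k"
proof -
  have "(kbul p k0 k - (t1 p k0 s + (p+1))) div (p+1) = (kbul p k0 k - t1 p k0 s) div (p+1) - 1"
    using assms(1) div_m1[of "p+1" "kbul p k0 k - t1 p k0 s"] by (simp add: algebra_simps)
  thus ?thesis unfolding d_ur_dag_def d_ur_def fdiv assms(2-4) by simp
qed

theorem mainTheorem6:
  fixes p k0 :: int and wk :: "int \<Rightarrow> 'a::comm_ring_1"
  assumes "prime p" and "p \<ge> 7" and "2 \<le> k0" and "k0 \<le> p"
  shows "(\<forall>s. 0 \<le> s \<and> s \<le> \<lfloor>real_of_int (k0 - 2) / 2\<rfloor> \<and> k0 - 1 - s \<le> p - 2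
            \<longrightarrow> G_dag p k0 wk s = G_dag p k0 wk (k0 - 1 - s))
       \<and> (\<forall>s. k0 \<le> s \<and> s \<le> \<lfloor>real_of_int (k0 - 2 + p - 1) / 2\<rfloor>
            \<longrightarrow> G_dag p k0 wk s = G_dag p k0 wk (k0 - 1 - s + p - 1))"
proof (intro conjI allI impI)
  fix s assume h: "0 \<le> s \<and> s \<le> \<lfloor>real_of_int (k0 - 2) / 2\<rfloor> \<and> k0 - 1 - s \<le> p - 2"
  hence h2: "2*s \<le> k0 - 2" unfolding fdiv2 by linarith
  show "G_dag p k0 wk s = G_dag p k0 wk (k0 - 1 - s)"
  proof (intro G_eq)
    fix k
    show "d_ur_dag p k0 s k = d_ur_dag p k0 (k0 - 1 - s) k"
    proof (cases "s = 0")
      case True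
      have A: "delta_s p k0 s = 0 \<and> t1 p k0 s = s \<and> t2 p k0 s = k0 - s"
        using c1s[of s k0 p] h h2 assms by auto
      have B: "delta_s p k0 (k0-1) = 1 \<and> t1 p k0 (k0-1) = k0 \<and> t2 p k0 (k0-1) = p+1"
        using c1z[of k0 p] h True assms by auto
      show ?thesis using A B True assms by (intro dur_shift) auto
    next
      case False
      have A: "delta_s p k0 s = 0 \<and> t1 p k0 s = s \<and> t2 p k0 s = k0 - s"
        using c1s[of s k0 p] h h2 assms by auto
      have B: "delta_s p k0 (k0-1-s) = 0 \<and> t1 p k0 (k0-1-s) = s \<and> t2 p k0 (k0-1-s) = k0 - s"
        using c1s'[of s k0 p] h h2 False assms by auto
      show ?thesis using A B by (intro dur_same) auto
    qed
  qed
next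
  fix s assume h: "k0 \<le> s \<and> s \<le> \<lfloor>real_of_int (k0 - 2 + p - 1) / 2\<rfloor>"
  hence h2: "2*s \<le> k0 + p - 3" unfolding fdiv2 by linarith
  show "G_dag p k0 wk s = G_dag p k0 wk (k0 - 1 - s + p - 1)"
  proof (intro G_eq dur_same)
    fix k
    show "delta_s p k0 s = delta_s p k0 (k0 - 1 - s + p - 1)"
      "t1 p k0 s = t1 p k0 (k0 - 1 - s + p - 1)" "t2 p k0 s = t2 p k0 (k0 - 1 - s + p - 1)"
      using c2s[of k0 s p] c2s'[of k0 s p] h h2 assms by auto
  qed
qed

end
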